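(* Let $\{\lambda_n\}_{n\geq 1}$ be i.i.d. random variables, each uniformly distributed on the interval $(3.87,4)$, and let $X_0$ be a $(0,1)$-valued random variable independent of the $\lambda_n$'s. Define the Markov process $X_{n+1}=\lambda_{n+1}X_n(1-X_n)$ for $n\geq 0$, and let $p^n(x,B)=\mathrm{Prob}(X_n\in B\mid X_0=x)$ denote its $n$-step transition probabilities. Let $A$ be a nonempty open subset of $(0,1)$. Then for every $x\in(0,1)$ there exists a positive integer $M$ such that $p^M(x,A)=\mathrm{Prob}(X_M\in A\mid X_0=x)>0$.
   Context: The one-step transition probability is $p(x,B)=\mathrm{Prob}(\lambda_1 x(1-x)\in B)$ for Borel $B\subset(0,1)$, and $p^n$ is the $n$-step transition probability of the Markov chain. *)

theory Defs
  imports "HOL-Probability.Probability"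
begin

definition lambda_law :: "real measure" where
  "lambda_law = uniform_measure lborel {387/100<..<4}"

definition step_kernel :: "real \<Rightarrow> real measure" where
  "step_kernel x = distr lambda_law borel (\<lambda>l. l * x * (1 - x))"

fun n_step :: "nat \<Rightarrow> real \<Rightarrow> real measure" where
  "n_step 0 x = return borel x"
| "n_step (Suc n) x = bind (n_step n x) step_kernel"

end

theory Submission
  imports Defs
begin


definition supp :: "real measure \<Rightarrow> real \<Rightarrow> bool" where
  "supp M z \<longleftrightarrow> (\<forall>V. open V \<longrightarrow> z \<in> V \<longrightarrow> emeasure M V > 0)"

lemma lambda_law_space: "lambda_law \<in> space (subprob_algebra borel)"
proof -
  have "prob_space lambda_law" unfolding lambda_law_def
    by (rule prob_space_uniform_measure) auto
  then show ?thesis unfolding lambda_law_def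
    by (auto simp: space_subprob_algebra prob_space_imp_subprob_space)
qed

lemma sets_lambda_law[simp]: "sets lambda_law = sets borel"
  unfolding lambda_law_def by simp

lemma step_kernel_meas: "step_kernel \<in> measurable borel (subprob_algebra borel)"
proof -
  have "(\<lambda>x. distr ((\<lambda>_. lambda_law) x) borel ((\<lambda>x l. l * x * (1 - x)) x)) \<in> measurable borel (subprob_algebra borel)"
    apply (rule measurable_distr2[where M=borel])
    subgoal by (simp add: case_prod_beta) measurable
    subgoal using lambda_law_space by (simp add: measurable_const)
    done
  moreover have "step_kernel = (\<lambda>x. distr lambda_law borel (\<lambda>l. l * x * (1 - x)))"
    by (simp add: fun_eq_iff step_kernel_def)
  ultimately show ?thesis by simp
qed

lemma n_step_space: "n_step n x \<in> space (subprob_algebra borel)"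
proof (induction n)
  case 0
  then show ?case by (simp add: space_subprob_algebra subprob_space_return)
next
  case (Suc n)
  have ne: "space (n_step n x) \<noteq> {}" using Suc sets_eq_imp_space_eq[of "n_step n x" borel] by (auto simp: space_subprob_algebra)
  have "subprob_space (n_step n x \<bind> step_kernel)"
    using Suc step_kernel_meas measurable_cong_sets[of "n_step n x" borel]
    by (intro subprob_space_bind[where N=borel]) (auto simp: space_subprob_algebra)
  moreover have "sets (n_step n x \<bind> step_kernel) = sets borel"
    by (rule sets_bind[OF _ ne]) (use step_kernel_meas in \<open>auto dest: subprob_measurableD\<close>)
  ultimately show ?case by (simp add: space_subprob_algebra)
qed

lemma supp_0: "supp (n_step 0 x) x"
  unfolding supp_def
proof (intro allI impI)
  fix V :: "real set" assume "open V" "x \<in> V"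
  hence "emeasure (return borel x) V = 1" using borel_open[of V] by simp
  thus "emeasure (n_step 0 x) V > 0" by simp
qed

lemma step_kernel_pos:
  assumes "open V" "l * y * (1 - y) \<in> V" "387/100 < l" "l < 4"
  shows "emeasure (step_kernel y) V > 0"
proof -
  have Vs: "V \<in> sets borel" using assms(1) by auto
  let ?W = "{l'. l' * y * (1 - y) \<in> V} \<inter> {387/100<..<4::real}"
  have cont: "continuous_on UNIV (\<lambda>l'::real. l' * y * (1 - y))" by (intro continuous_intros)
  have "open {l'. l' * y * (1 - y) \<in> V}"
    using open_vimage[OF assms(1) cont] by (simp add: vimage_def)
  hence oW: "open ?W" by auto
  have lW: "l \<in> ?W" using assms by auto
  then obtain e where e: "e > 0" "ball l e \<subseteq> ?W" using oW open_contains_ball by blast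
  have "{l - e <..< l + e} = ball l e" by (auto simp: ball_def dist_real_def)
  hence "emeasure lborel {l - e <..< l + e} \<le> emeasure lborel ?W"
    using e borel_open[OF oW] by (intro emeasure_mono) auto
  moreover have "emeasure lborel {l - e <..< l + e} = ennreal (2*e)" using e by simp
  ultimately have pos: "emeasure lborel ?W > 0" using e
    by (metis ennreal_eq_0_iff leD linorder_not_le not_gr_zero mult_pos_pos zero_less_numeral order.strict_iff_not)
  have "emeasure (step_kernel y) V = emeasure lambda_law ((\<lambda>l. l * y * (1 - y)) -` V \<inter> space lambda_law)"
    unfolding step_kernel_def
    by (rule emeasure_distr) (auto simp: Vs measurable_cong_sets[OF sets_lambda_law refl])
  also have "\<dots> = emeasure lborel ({387/100<..<4} \<inter> ((\<lambda>l. l * y * (1 - y)) -` V)) / emeasure lborel {387/100<..<4::real}"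
    unfolding lambda_law_def
    apply (subst emeasure_uniform_measure)
    using Vs by (auto simp: vimage_def)
  also have "\<dots> = emeasure lborel ?W / ennreal (13/100)"
    by (simp add: Int_commute vimage_def)
  finally show ?thesis using pos
    by (simp add: zero_less_iff_neq_zero ennreal_divide_eq_0_iff)
qed

lemma supp_step:
  assumes "supp (n_step n x) z" "387/100 < l" "l < 4"
  shows "supp (n_step (Suc n) x) (l * z * (1 - z))"
  unfolding supp_def
proof (intro allI impI)
  fix V :: "real set" assume V: "open V" "l * z * (1 - z) \<in> V"
  let ?M = "n_step n x"
  have Vs: "V \<in> sets borel" using V by auto
  have ne: "space ?M \<noteq> {}" using n_step_space[of n x] sets_eq_imp_space_eq[of "n_step n x" borel] by (auto simp: space_subprob_algebra)
  have sM: "sets ?M = sets borel" using n_step_space[of n x] by (auto simp: space_subprob_algebra)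
  have km: "step_kernel \<in> measurable ?M (subprob_algebra borel)"
    using step_kernel_meas measurable_cong_sets[OF sM refl] by blast
  have eq: "emeasure (n_step (Suc n) x) V = \<integral>\<^sup>+y. emeasure (step_kernel y) V \<partial>?M"
    by (simp only: n_step.simps) (rule emeasure_bind[OF ne km Vs])
  let ?U = "{y. l * y * (1 - y) \<in> V}"
  have cont: "continuous_on UNIV (\<lambda>y::real. l * y * (1 - y))" by (intro continuous_intros)
  have oU: "open ?U" using open_vimage[OF V(1) cont] by (simp add: vimage_def)
  have zU: "z \<in> ?U" using V by simp
  have posU: "emeasure ?M ?U > 0" using assms(1) oU zU unfolding supp_def by blast
  show "emeasure (n_step (Suc n) x) V > 0"
  proof (rule ccontr)
    assume "\<not> ?thesis"
    hence "(\<integral>\<^sup>+y. emeasure (step_kernel y) V \<partial>?M) = 0" using eq by simp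
    moreover have "(\<lambda>y. emeasure (step_kernel y) V) \<in> borel_measurable ?M"
      using measurable_emeasure_kernel[OF km Vs] .
    ultimately have AE0: "AE y in ?M. emeasure (step_kernel y) V = 0"
      using nn_integral_0_iff_AE by blast
    have H: "\<forall>y. emeasure (step_kernel y) V = 0 \<longrightarrow> y \<notin> ?U"
    proof (intro allI impI notI)
      fix y assume "emeasure (step_kernel y) V = 0" "y \<in> ?U"
      thus False using step_kernel_pos[OF V(1) _ assms(2,3), of y] by simp
    qed
    have "AE y in ?M. emeasure (step_kernel y) V = 0 \<longrightarrow> y \<notin> ?U"
      using H by (intro AE_I2) blast
    from AE_mp[OF AE0 this] have AEU: "AE y in ?M. y \<notin> ?U" .
    have Us: "?U \<in> sets ?M" unfolding sM using borel_open[OF oU] .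
    have SE: "{y \<in> space ?M. \<not> (y \<notin> ?U)} = ?U" unfolding sets_eq_imp_space_eq[OF sM] by simp
    have "emeasure ?M ?U = 0"
      using AE_iff_measurable[where P="\<lambda>y. y \<notin> ?U", OF Us SE] AEU by (simp only:)
    thus False using posU by simp
  qed
qed



definition reach1 :: "real \<Rightarrow> real \<Rightarrow> bool" where
  "reach1 y w \<longleftrightarrow> (\<exists>l. 387/100 < l \<and> l < 4 \<and> w = l * y * (1 - y))"

lemma reach_supp:
  assumes "reach1\<^sup>+\<^sup>+ x w"
  shows "\<exists>M>0. supp (n_step M x) w"
  using assms
proof (induction rule: tranclp_induct)
  case (base y)
  then obtain l where "387/100 < l" "l < 4" "y = l * x * (1 - x)" unfolding reach1_def by blast
  then show ?case using supp_step[OF supp_0] by (intro exI[of _ 1]) auto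
next
  case (step y z)
  then obtain M where M: "M > 0" "supp (n_step M x) y" by blast
  from step obtain l where "387/100 < l" "l < 4" "z = l * y * (1 - y)" unfolding reach1_def by blast
  then show ?case using supp_step[OF M(2)] by (intro exI[of _ "Suc M"]) auto
qed

definition Good :: "real \<Rightarrow> bool" where
  "Good y \<longleftrightarrow> (\<forall>w\<in>{0<..<1}. reach1\<^sup>+\<^sup>+ y w)"

lemma good_back: "reach1 y z \<Longrightarrow> Good z \<Longrightarrow> Good y"
  unfolding Good_def by (meson tranclp.r_into_trancl tranclp_trans)

lemma lower_root:
  fixes q :: real
  assumes "0 < q" "q < c * (1 - c)" "0 < c" "c \<le> 1/2"
  shows "\<exists>y. 0 < y \<and> y < c \<and> y * (1 - y) = q"
proof -
  define s where "s = sqrt (1 - 4*q)"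
  have "(1 - 2*c)^2 = 1 - 4*(c*(1-c))" by (simp add: power2_eq_square algebra_simps)
  hence h: "(1 - 2*c)^2 < 1 - 4*q" using assms by linarith
  have h0: "0 \<le> 1 - 2*c" using assms by simp
  have nn: "0 \<le> 1 - 4*q" using h by (metis le_less_trans zero_le_power2 less_imp_le)
  have s0: "0 \<le> s" unfolding s_def using nn by simp
  have "1 - 4*q < 1" using assms by simp
  hence s1: "s < 1" unfolding s_def using nn by simp
  have "sqrt ((1 - 2*c)^2) < s" unfolding s_def using h by (rule real_sqrt_less_mono)
  hence "1 - 2*c < s" using h0 by simp
  moreover have "s^2 = 1 - 4*q" unfolding s_def using assms h
    by (metis le_less_trans real_sqrt_pow2 zero_le_power2 less_imp_le)
  moreover have "(1 - s)/2 * (1 - (1 - s)/2) = (1 - s^2)/4"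
    by (simp add: field_simps power2_eq_square)
  ultimately have "(1 - s)/2 * (1 - (1 - s)/2) = q" by simp
  moreover have "0 < (1 - s)/2" "(1 - s)/2 < c" using s1 \<open>1 - 2*c < s\<close> by simp_all
  ultimately show ?thesis by blast
qed

lemma F1: "387/400 < y \<Longrightarrow> y < 1 \<Longrightarrow> reach1 (1/2) y"
  unfolding reach1_def by (intro exI[of _ "4*y"]) auto

lemma F2:
  assumes "0 < w" "w < 12/100"
  shows "\<exists>y. 387/400 < y \<and> y < 1 \<and> reach1 y w"
proof -
  obtain y where y: "0 < y" "y < 13/400" "y * (1 - y) = w / (39/10)"
    using lower_root[of "w/(39/10)" "13/400"] assms by auto
  have "reach1 (1 - y) w" unfolding reach1_def
    by (intro exI[of _ "39/10"]) (use y in \<open>auto simp: algebra_simps\<close>)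
  thus ?thesis using y by (intro exI[of _ "1 - y"]) auto
qed

lemma F3:
  assumes "0 < w" "w < 39/10 * (c * (1 - c))" "0 < c" "c \<le> 1/2"
  shows "\<exists>y. 0 < y \<and> y < c \<and> reach1 y w"
proof -
  obtain y where y: "0 < y" "y < c" "y * (1 - y) = w / (39/10)"
    using lower_root[of "w/(39/10)" c] assms by auto
  have "reach1 y w" unfolding reach1_def
    by (intro exI[of _ "39/10"]) (use y in \<open>auto simp: algebra_simps\<close>)
  thus ?thesis using y by auto
qed

lemma F4:
  assumes "0 < w" "w < 1"
  shows "\<exists>y. 0 < y \<and> y < 1/2 \<and> reach1 y w"
proof -
  define l where "l = (4 + max (387/100) (4*w)) / 2"
  have l1: "387/100 < l" "l < 4" "4*w < l" unfolding l_def using assms by auto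
  have lp: "l > 0" using l1 by simp
  have "w / l < 1/4" using l1 lp by (simp add: divide_simps)
  then obtain y where y: "0 < y" "y < 1/2" "y * (1 - y) = w / l"
    using lower_root[of "w/l" "1/2"] assms lp by auto
  have "l * (y * (1 - y)) = l * (w / l)" using y(3) by simp
  also have "\<dots> = w" using lp by simp
  finally have "l * (y * (1 - y)) = w" .
  hence "w = l * y * (1 - y)" by (simp only: mult.assoc)
  hence "reach1 y w" unfolding reach1_def using l1 by blast
  thus ?thesis using y by auto
qed

lemma good_half: "Good (1/2)"
  unfolding Good_def
proof
  fix w :: real assume "w \<in> {0<..<1}"
  then obtain y3 where y3: "0 < y3" "y3 < 1/2" "reach1 y3 w" using F4 by auto
  obtain y2 where y2: "0 < y2" "y2 < 41/100" "reach1 y2 y3"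
    using F3[of y3 "41/100"] y3 by auto
  obtain y1 where y1: "0 < y1" "y1 < 12/100" "reach1 y1 y2"
    using F3[of y2 "12/100"] y2 by auto
  obtain y0 where y0: "387/400 < y0" "y0 < 1" "reach1 y0 y1"
    using F2[of y1] y1 by auto
  have "reach1 (1/2) y0" using F1 y0 by auto
  thus "reach1\<^sup>+\<^sup>+ (1/2) w" using y0 y1 y2 y3
    by (meson tranclp.r_into_trancl tranclp.trancl_into_trancl)
qed

lemma good_pre:
  assumes G: "\<forall>z. c \<le> z \<and> z \<le> d \<longrightarrow> Good z" and cd: "c \<le> d" and c0: "0 \<le> c"
    and q: "c < 4 * (y * (1 - y))" "387/100 * (y * (1 - y)) < d"
  shows "Good y"
proof -
  define qq where "qq = y * (1 - y)"
  have qp: "qq > 0" using q c0 unfolding qq_def by linarith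
  define lo where "lo = max c (387/100 * qq)"
  define hi where "hi = min d (4 * qq)"
  define w where "w = (lo + hi) / 2"
  have "lo \<le> hi" "387/100*qq < hi" "lo < 4*qq" using q cd qp unfolding lo_def hi_def qq_def by auto
  hence w: "387/100*qq < w" "w < 4*qq" "c \<le> w" "w \<le> d"
    unfolding w_def lo_def hi_def by auto
  have "w / qq * y * (1 - y) = w / qq * qq" by (simp add: qq_def mult.assoc)
  also have "\<dots> = w" using qp by simp
  finally have e: "w = w / qq * y * (1 - y)" by simp
  have "387/100 < w / qq" "w / qq < 4" using w qp by (simp_all add: field_simps)
  hence "reach1 y w" unfolding reach1_def using e by blast
  moreover have "Good w" using G w by auto
  ultimately show ?thesis by (rule good_back)
qed

definition GoodOn :: "real \<Rightarrow> real \<Rightarrow> bool" where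
  "GoodOn a b \<longleftrightarrow> (\<forall>z. a \<le> z \<and> z \<le> b \<longrightarrow> Good z)"

lemma q_mono:
  fixes u y :: real
  assumes "u \<le> y" "u + y \<le> 1"
  shows "u * (1 - u) \<le> y * (1 - y)"
proof -
  have "y * (1 - y) - u * (1 - u) = (y - u) * (1 - y - u)" by (simp add: algebra_simps)
  also have "\<dots> \<ge> 0" using assms by simp
  finally show ?thesis by simp
qed

lemma q_le: "y * (1 - y) \<le> (1/4::real)"
proof -
  have "1/4 - y * (1 - y) = (y - 1/2)^2" by (simp add: power2_eq_square algebra_simps)
  thus ?thesis by (metis diff_ge_0_iff_ge zero_le_power2)
qed

lemma cover_lo:
  assumes "GoodOn c d" "c \<le> d" "0 \<le> c" "0 \<le> u" "v \<le> 1/2"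
    "c < 4 * (u * (1 - u))" "387/100 * (v * (1 - v)) < d"
  shows "GoodOn u v"
  unfolding GoodOn_def
proof (intro allI impI)
  fix y assume y: "u \<le> y \<and> y \<le> v"
  have "u * (1 - u) \<le> y * (1 - y)" using y assms by (intro q_mono) auto
  moreover have "y * (1 - y) \<le> v * (1 - v)" using y assms by (intro q_mono) auto
  ultimately show "Good y" using assms unfolding GoodOn_def
    by (intro good_pre[of c d]) auto
qed

lemma cover_hi:
  assumes "GoodOn c d" "c \<le> d" "0 \<le> c" "1/2 \<le> u" "v \<le> 1"
    "c < 4 * (v * (1 - v))" "387/100 * (u * (1 - u)) < d"
  shows "GoodOn u v"
  unfolding GoodOn_def
proof (intro allI impI)
  fix y assume y: "u \<le> y \<and> y \<le> v"
  have "y * (1 - y) \<le> u * (1 - u)" using q_mono[of "1-y" "1-u"] y assms by (auto simp: algebra_simps)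
  moreover have "v * (1 - v) \<le> y * (1 - y)" using q_mono[of "1-v" "1-y"] y assms by (auto simp: algebra_simps)
  ultimately show "Good y" using assms unfolding GoodOn_def
    by (intro good_pre[of c d]) auto
qed

lemma cover_mid:
  assumes "GoodOn c d" "c \<le> d" "0 \<le> c" "0 \<le> u" "u \<le> 1/2" "1/2 \<le> v" "v \<le> 1"
    "c < 4 * (u * (1 - u))" "c < 4 * (v * (1 - v))" "387/100 * (1/4) < d"
  shows "GoodOn u v"
  unfolding GoodOn_def
proof (intro allI impI)
  fix y assume y: "u \<le> y \<and> y \<le> v"
  have "c < 4 * (y * (1 - y))"
  proof (cases "y \<le> 1/2")
    case True
    then show ?thesis using q_mono[of u y] y assms by auto
  next
    case False
    then show ?thesis using q_mono[of "1-v" "1-y"] y assms by (auto simp: algebra_simps)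
  qed
  moreover have "387/100 * (y * (1 - y)) < d" using q_le[of y] assms by linarith
  ultimately show "Good y" using assms unfolding GoodOn_def
    by (intro good_pre[of c d]) auto
qed

lemma merge: "GoodOn a b \<Longrightarrow> GoodOn u v \<Longrightarrow> u \<le> b \<Longrightarrow> GoodOn a v"
  unfolding GoodOn_def
proof (intro allI impI)
  fix z assume A: "\<forall>z. a \<le> z \<and> z \<le> b \<longrightarrow> Good z" "\<forall>z. u \<le> z \<and> z \<le> v \<longrightarrow> Good z"
    "u \<le> b" "a \<le> z \<and> z \<le> v"
  show "Good z"
  proof (cases "z \<le> b")
    case True thus ?thesis using A by blast
  next
    case False thus ?thesis using A by auto
  qed
qed

lemma big_cover: "GoodOn (4/625) (621/625)"
proof -
  have half: "GoodOn (1/2) (1/2)" unfolding GoodOn_def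
  proof (intro allI impI)
    fix z :: real assume "1/2 \<le> z \<and> z \<le> 1/2"
    hence "z = 1/2" by linarith
    thus "Good z" using good_half by (simp only:)
  qed
    have g1: "GoodOn (733/5000) (1523/10000)"
      by (rule cover_lo[OF half]) (simp_all add: divide_simps)
    have g2: "GoodOn (8477/10000) (4267/5000)"
      by (rule cover_hi[OF half]) (simp_all add: divide_simps)
    have g3: "GoodOn (383/10000) (409/10000)"
      by (rule cover_lo[OF g1]) (simp_all add: divide_simps)
    have g4: "GoodOn (9591/10000) (9617/10000)"
      by (rule cover_hi[OF g1]) (simp_all add: divide_simps)
    have g5: "GoodOn (61/200) (3281/10000)"
      by (rule cover_lo[OF g2]) (simp_all add: divide_simps)
    have g6: "GoodOn (6719/10000) (139/200)"
      by (rule cover_hi[OF g2]) (simp_all add: divide_simps)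
    have g8: "GoodOn (1979/2000) (4951/5000)"
      by (rule cover_hi[OF g3]) (simp_all add: divide_simps)
    have g10: "GoodOn (4533/5000) (9167/10000)"
      by (rule cover_hi[OF g5]) (simp_all add: divide_simps)
    have g11: "GoodOn (2137/10000) (469/2000)"
      by (rule cover_lo[OF g6]) (simp_all add: divide_simps)
    have g12: "GoodOn (1531/2000) (7863/10000)"
      by (rule cover_hi[OF g6]) (simp_all add: divide_simps)
    have g13: "GoodOn (399/1000) (4611/10000)"
      by (rule cover_lo[OF g4]) (simp_all add: divide_simps)
    have g14: "GoodOn (5389/10000) (601/1000)"
      by (rule cover_hi[OF g4]) (simp_all add: divide_simps)
    have g18: "GoodOn (4677/5000) (1179/1250)"
      by (rule cover_hi[OF g11]) (simp_all add: divide_simps)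
    have g19: "GoodOn (9/80) (1381/10000)"
      by (rule cover_lo[OF g13]) (simp_all add: divide_simps)
    have g20: "GoodOn (8619/10000) (71/80)"
      by (rule cover_hi[OF g13]) (simp_all add: divide_simps)
    have g22: "GoodOn (8079/10000) (4197/5000)"
      by (rule cover_hi[OF g14]) (simp_all add: divide_simps)
    have g23: "GoodOn (129/500) (567/2000)"
      by (rule cover_lo[OF g12]) (simp_all add: divide_simps)
    have g24: "GoodOn (1433/2000) (371/500)"
      by (rule cover_hi[OF g12]) (simp_all add: divide_simps)
    have g25: "GoodOn (3473/10000) (3853/10000)"
      by (rule cover_lo[OF g10]) (simp_all add: divide_simps)
    have g26: "GoodOn (6147/10000) (6527/10000)"
      by (rule cover_hi[OF g10]) (simp_all add: divide_simps)
    have g27: "GoodOn (4489/10000) (5511/10000)"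
      by (rule cover_mid[OF g8]) (simp_all add: divide_simps)
    have g28: "GoodOn (399/1000) (5511/10000)"
      by (rule merge[OF g13 g27]) simp_all
    have g29: "GoodOn (399/1000) (601/1000)"
      by (rule merge[OF g28 g14]) simp_all
    have g34: "GoodOn (291/10000) (369/10000)"
      by (rule cover_lo[OF g19]) (simp_all add: divide_simps)
    have g40: "GoodOn (481/5000) (14/125)"
      by (rule cover_lo[OF g25]) (simp_all add: divide_simps)
    have g42: "GoodOn (9/80) (1921/10000)"
      by (rule cover_lo[OF g29]) (simp_all add: divide_simps)
    have g43: "GoodOn (8079/10000) (71/80)"
      by (rule cover_hi[OF g29]) (simp_all add: divide_simps)
    have g44: "GoodOn (949/5000) (1073/5000)"
      by (rule cover_lo[OF g26]) (simp_all add: divide_simps)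
    have g45: "GoodOn (3927/5000) (4051/5000)"
      by (rule cover_hi[OF g26]) (simp_all add: divide_simps)
    have g46: "GoodOn (2339/10000) (517/2000)"
      by (rule cover_lo[OF g24]) (simp_all add: divide_simps)
    have g47: "GoodOn (1483/2000) (7661/10000)"
      by (rule cover_hi[OF g24]) (simp_all add: divide_simps)
    have g48: "GoodOn (281/1000) (3179/10000)"
      by (rule cover_lo[OF g22]) (simp_all add: divide_simps)
    have g49: "GoodOn (6821/10000) (719/1000)"
      by (rule cover_hi[OF g22]) (simp_all add: divide_simps)
    have g50: "GoodOn (3143/10000) (3561/10000)"
      by (rule cover_lo[OF g20]) (simp_all add: divide_simps)
    have g51: "GoodOn (6439/10000) (6857/10000)"
      by (rule cover_hi[OF g20]) (simp_all add: divide_simps)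
    have g52: "GoodOn (3731/10000) (2103/5000)"
      by (rule cover_lo[OF g18]) (simp_all add: divide_simps)
    have g53: "GoodOn (2897/5000) (6269/10000)"
      by (rule cover_hi[OF g18]) (simp_all add: divide_simps)
    have g54: "GoodOn (9/80) (1921/10000)"
      by (rule merge[OF g19 g42]) simp_all
    have g55: "GoodOn (9/80) (1073/5000)"
      by (rule merge[OF g54 g44]) simp_all
    have g56: "GoodOn (9/80) (469/2000)"
      by (rule merge[OF g55 g11]) simp_all
    have g57: "GoodOn (9/80) (517/2000)"
      by (rule merge[OF g56 g46]) simp_all
    have g58: "GoodOn (9/80) (567/2000)"
      by (rule merge[OF g57 g23]) simp_all
    have g59: "GoodOn (9/80) (3179/10000)"
      by (rule merge[OF g58 g48]) simp_all
    have g60: "GoodOn (9/80) (3281/10000)"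
      by (rule merge[OF g59 g5]) simp_all
    have g61: "GoodOn (9/80) (3561/10000)"
      by (rule merge[OF g60 g50]) simp_all
    have g62: "GoodOn (9/80) (3853/10000)"
      by (rule merge[OF g61 g25]) simp_all
    have g63: "GoodOn (9/80) (2103/5000)"
      by (rule merge[OF g62 g52]) simp_all
    have g64: "GoodOn (9/80) (601/1000)"
      by (rule merge[OF g63 g29]) simp_all
    have g65: "GoodOn (9/80) (6269/10000)"
      by (rule merge[OF g64 g53]) simp_all
    have g66: "GoodOn (9/80) (6527/10000)"
      by (rule merge[OF g65 g26]) simp_all
    have g67: "GoodOn (9/80) (6857/10000)"
      by (rule merge[OF g66 g51]) simp_all
    have g68: "GoodOn (9/80) (139/200)"
      by (rule merge[OF g67 g6]) simp_all
    have g69: "GoodOn (9/80) (719/1000)"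
      by (rule merge[OF g68 g49]) simp_all
    have g70: "GoodOn (9/80) (371/500)"
      by (rule merge[OF g69 g24]) simp_all
    have g71: "GoodOn (9/80) (7661/10000)"
      by (rule merge[OF g70 g47]) simp_all
    have g72: "GoodOn (9/80) (7863/10000)"
      by (rule merge[OF g71 g12]) simp_all
    have g73: "GoodOn (9/80) (4051/5000)"
      by (rule merge[OF g72 g45]) simp_all
    have g74: "GoodOn (9/80) (4197/5000)"
      by (rule merge[OF g73 g22]) simp_all
    have g75: "GoodOn (9/80) (71/80)"
      by (rule merge[OF g74 g43]) simp_all
    have g84: "GoodOn (31/1250) (297/10000)"
      by (rule cover_lo[OF g40]) (simp_all add: divide_simps)
    have g85: "GoodOn (9703/10000) (1219/1250)"
      by (rule cover_hi[OF g40]) (simp_all add: divide_simps)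
    have g86: "GoodOn (291/10000) (3561/10000)"
      by (rule cover_lo[OF g75]) (simp_all add: divide_simps)
    have g87: "GoodOn (6439/10000) (9709/10000)"
      by (rule cover_hi[OF g75]) (simp_all add: divide_simps)
    have g88: "GoodOn (31/1250) (369/10000)"
      by (rule merge[OF g84 g34]) simp_all
    have g89: "GoodOn (31/1250) (3561/10000)"
      by (rule merge[OF g88 g86]) simp_all
    have g90: "GoodOn (31/1250) (71/80)"
      by (rule merge[OF g89 g75]) simp_all
    have g91: "GoodOn (31/1250) (9709/10000)"
      by (rule merge[OF g90 g87]) simp_all
    have g92: "GoodOn (31/1250) (1219/1250)"
      by (rule merge[OF g91 g85]) simp_all
    have g99: "GoodOn (4/625) (621/625)"
      by (rule cover_mid[OF g92]) (simp_all add: divide_simps)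
  show ?thesis by (rule g99)
qed


lemma small_good:
  fixes n :: nat
  shows "\<forall>y. 1/100 / (38/10)^n \<le> y \<and> y \<le> 39/1000 \<longrightarrow> Good y"
proof (induction n)
  case 0
  show ?case using big_cover unfolding GoodOn_def by auto
next
  case (Suc n)
  show ?case
  proof (intro allI impI)
    fix y :: real assume y: "1/100 / (38/10)^Suc n \<le> y \<and> y \<le> 39/1000"
    show "Good y"
    proof (cases "1/100 / (38/10)^n \<le> y")
      case True thus ?thesis using Suc y by blast
    next
      case False
      have pp: "(0::real) < (38/10)^n" by simp
      have p1: "(1::real) \<le> (38/10)^n" by (rule one_le_power) simp
      have "0 < 1/100 / (38/10::real)^Suc n" by simp
      hence yp: "0 < y" using y by linarith
      have "1/100 / (38/10::real)^n \<le> 1/100" using p1 pp by (simp add: divide_le_eq)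
      hence yt: "y < 1/100" using False by linarith
      define z where "z = 39/10 * y * (1 - y)"
      have zexp: "z = 39/10*y - 39/10*(y*y)" by (simp add: z_def right_diff_distrib mult.assoc)
      have "y*y \<le> y * (1/100)" using yp yt by (intro mult_left_mono) auto
      hence "38/10 * y \<le> z" using zexp yp by linarith
      moreover have "1/100 / (38/10)^n = 38/10 * (1/100 / (38/10::real)^Suc n)" by simp
      ultimately have z1: "1/100 / (38/10)^n \<le> z" using y by linarith
      have "0 \<le> y * y" by simp
      hence z2: "z \<le> 39/1000" using zexp yt by linarith
      have "Good z" using Suc z1 z2 by blast
      moreover have "reach1 y z" unfolding reach1_def z_def by (intro exI[of _ "39/10"]) auto
      ultimately show ?thesis using good_back by blast
    qed
  qed
qed

lemma all_good:
  assumes "0 < y" "y < 1"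
  shows "Good y"
proof -
  have sm: "Good y" if "0 < y" "y \<le> 39/1000" for y :: real
  proof -
    obtain n where "1/100 / y < (38/10::real)^n" using real_arch_pow[of "38/10" "1/100/y"] by auto
    hence "1/100 / (38/10)^n \<le> y" using that by (simp add: field_simps)
    thus ?thesis using small_good[of n] that by blast
  qed
  show ?thesis
  proof (cases "y \<le> 621/625")
    case True
    show ?thesis
    proof (cases "y \<le> 39/1000")
      case True thus ?thesis using sm assms by auto
    next
      case False thus ?thesis using big_cover \<open>y \<le> 621/625\<close> unfolding GoodOn_def by auto
    qed
  next
    case False
    define z where "z = 39/10 * y * (1 - y)"
    have z0: "0 < z" unfolding z_def using assms by simp
    have "y*(1-y) \<le> 1*(1-y)" using assms by (intro mult_right_mono) auto
    moreover have "z = 39/10*(y*(1-y))" by (simp add: z_def mult.assoc)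
    ultimately have "z \<le> 39/10 * (1 - y)" by linarith
    hence "z \<le> 39/10 - 39/10 * y" by (simp add: right_diff_distrib)
    hence "z \<le> 39/1000" using False by linarith
    hence "Good z" using sm z0 by blast
    moreover have "reach1 y z" unfolding reach1_def z_def by (intro exI[of _ "39/10"]) auto
    ultimately show ?thesis using good_back by blast
  qed
qed

theorem mainTheorem1:
  fixes A :: "real set"
  assumes "open A" and "A \<noteq> {}" and "A \<subseteq> {0<..<1}"
  shows "\<forall>x\<in>{0<..<1::real}. \<exists>M::nat. M > 0 \<and> emeasure (n_step M x) A > 0"
proof
  fix x :: real assume x: "x \<in> {0<..<1}"
  obtain w where w: "w \<in> A" using assms(2) by auto
  hence "w \<in> {0<..<1}" using assms(3) by auto
  hence "reach1\<^sup>+\<^sup>+ x w" using all_good[of x] x unfolding Good_def by auto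
  then obtain M where "M > 0" "supp (n_step M x) w" using reach_supp by blast
  thus "\<exists>M::nat. M > 0 \<and> emeasure (n_step M x) A > 0"
    using assms(1) w unfolding supp_def by blast
qed

end
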